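(* Let $G,H$ be $p$-regular multigraphs that are not isomorphic. Then $\mathbb{E}_{W\sim\mathrm{Wig}}\, m^c_G(W)\,m^c_H(W)=0$.
   Context: $\mathrm{Wig}$ is the law of the symmetric tensor $W\in\mathrm{Sym}^p(\mathbb{R}^n)$ with $W_{i_1,\dots,i_p}=\frac{1}{\sqrt{p!}}\sum_{\pi\in S_p}G_{i_{\pi(1)},\dots,i_{\pi(p)}}$, $G$ with i.i.d. $\mathcal{N}(0,1)$ entries; $T_S$ denotes the entry of a symmetric tensor indexed by a multiset $S$. Multigraphs $G=(V,E)$ may have loops and parallel edges (loop contributes 2 to degree). For $i\in[n]^E$, $i(\partial v)$ is the multiset of labels of edges at $v$ (loops counted twice). A Frobenius pair is a connected component consisting of two vertices joined by $p$ parallel edges; with $U$ the set of vertices in Frobenius pairs, $i(\pi)$ the multiset of edge labels of a pair $\pi$, and $b=|E|$, $m^c_G(T)=\sum_{i\in[n]^E,\ i_1,\dots,i_b\text{ distinct}}\big[\prod_{v\in V\setminus U}T_{i(\partial v)}\prod_\pi(T_{i(\pi)}^2-1)\big]$, the product over Frobenius pairs $\pi$ of $G$; $m^c_\emptyset=1$. *)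

theory Defs
  imports "HOL-Probability.Probability"
begin

text \<open>A multigraph: vertex set, edge set, and for each edge the multiset of its
two endpoints (a loop at v has ends {#v,v#}).\<close>
record ('v,'e) mgraph =
  verts :: "'v set"
  edges :: "'e set"
  ends  :: "'e \<Rightarrow> 'v multiset"

definition wf_mgraph :: "('v,'e) mgraph \<Rightarrow> bool" where
  "wf_mgraph G \<longleftrightarrow> finite (verts G) \<and> finite (edges G) \<and>
     (\<forall>e\<in>edges G. size (ends G e) = 2 \<and> set_mset (ends G e) \<subseteq> verts G)"

text \<open>Degree; a loop contributes 2.\<close>
definition mdeg :: "('v,'e) mgraph \<Rightarrow> 'v \<Rightarrow> nat" where
  "mdeg G v = (\<Sum>e\<in>edges G. count (ends G e) v)"

definition regular :: "nat \<Rightarrow> ('v,'e) mgraph \<Rightarrow> bool" where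
  "regular p G \<longleftrightarrow> wf_mgraph G \<and> (\<forall>v\<in>verts G. mdeg G v = p)"

definition mgraph_iso :: "('v,'e) mgraph \<Rightarrow> ('w,'f) mgraph \<Rightarrow> bool" where
  "mgraph_iso G H \<longleftrightarrow> (\<exists>f h. bij_betw f (verts G) (verts H) \<and> bij_betw h (edges G) (edges H) \<and>
     (\<forall>e\<in>edges G. ends H (h e) = image_mset f (ends G e)))"

definition frob_pair :: "nat \<Rightarrow> ('v,'e) mgraph \<Rightarrow> 'v \<Rightarrow> 'v \<Rightarrow> bool" where
  "frob_pair p G u w \<longleftrightarrow> u \<in> verts G \<and> w \<in> verts G \<and> u \<noteq> w \<and>
     (\<forall>e\<in>edges G. (u \<in># ends G e \<or> w \<in># ends G e) \<longrightarrow> ends G e = {#u, w#}) \<and>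
     card {e\<in>edges G. ends G e = {#u, w#}} = p"

definition frob_verts :: "nat \<Rightarrow> ('v,'e) mgraph \<Rightarrow> 'v set" where
  "frob_verts p G = {u\<in>verts G. \<exists>w. frob_pair p G u w}"

definition frob_pairs :: "nat \<Rightarrow> ('v,'e) mgraph \<Rightarrow> 'v set set" where
  "frob_pairs p G = {{u, w} | u w. frob_pair p G u w}"

text \<open>i(\<partial>v): multiset of labels of edges at v (loops counted twice).\<close>
definition lab_at :: "('v,'e) mgraph \<Rightarrow> ('e \<Rightarrow> nat) \<Rightarrow> 'v \<Rightarrow> nat multiset" where
  "lab_at G i v = (\<Sum>e\<in>edges G. replicate_mset (count (ends G e) v) (i e))"

definition lab_pair :: "('v,'e) mgraph \<Rightarrow> ('e \<Rightarrow> nat) \<Rightarrow> 'v set \<Rightarrow> nat multiset" where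
  "lab_pair G i P = image_mset i (mset_set {e\<in>edges G. set_mset (ends G e) = P})"

text \<open>m^c_G(T), with T a symmetric tensor given by its entries T_S indexed by multisets S
of indices in [n] = {0..<n}.\<close>
definition mc :: "nat \<Rightarrow> nat \<Rightarrow> ('v,'e) mgraph \<Rightarrow> (nat multiset \<Rightarrow> real) \<Rightarrow> real" where
  "mc n p G T = (\<Sum>i\<in>{i\<in>edges G \<rightarrow>\<^sub>E {..<n}. inj_on i (edges G)}.
      (\<Prod>v\<in>verts G - frob_verts p G. T (lab_at G i v)) *
      (\<Prod>P\<in>frob_pairs p G. (T (lab_pair G i P))\<^sup>2 - 1))"

definition tuples :: "nat \<Rightarrow> nat \<Rightarrow> nat list set" where
  "tuples n p = {xs. length xs = p \<and> set xs \<subseteq> {..<n}}"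

definition std_gauss :: "real measure" where
  "std_gauss = density lborel std_normal_density"

definition gauss_tensor :: "nat \<Rightarrow> nat \<Rightarrow> (nat list \<Rightarrow> real) measure" where
  "gauss_tensor n p = PiM (tuples n p) (\<lambda>_. std_gauss)"

text \<open>W_{i_1..i_p} = (1/sqrt p!) sum_{\<pi>\<in>S_p} G_{i_\<pi>(1)..i_\<pi>(p)}; the entry W_S for a
multiset S is obtained from any ordering of S (here the sorted one).\<close>
definition wig_tensor :: "nat \<Rightarrow> (nat list \<Rightarrow> real) \<Rightarrow> nat multiset \<Rightarrow> real" where
  "wig_tensor p g S = (let xs = sorted_list_of_multiset S in
     (1 / sqrt (fact p)) * (\<Sum>\<pi>\<in>{\<pi>. \<pi> permutes {..<p}}. g (map (\<lambda>k. xs ! \<pi> k) [0..<p])))"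

end

theory Submission
  imports Defs
begin

lemma prob_gauss: "prob_space std_gauss"
  unfolding std_gauss_def by (rule prob_space_normal_density) simp

lemma sets_gauss[simp]: "sets std_gauss = sets borel"
  by (simp add: std_gauss_def)

lemma space_gauss[simp]: "space std_gauss = UNIV"
  by (simp add: std_gauss_def)

lemma gauss_integrable_pow: "integrable std_gauss (\<lambda>x. x ^ k)"
  unfolding std_gauss_def
  by (subst integrable_density) (auto simp: normal_density_nonneg integrable_std_normal_moment)

lemma gauss_integrable_abs_pow: "integrable std_gauss (\<lambda>x. \<bar>x\<bar> ^ k)"
  unfolding std_gauss_def
  by (subst integrable_density) (auto simp: normal_density_nonneg integrable_std_normal_moment_abs)

lemma gauss_mean: "(\<integral>x. x \<partial>std_gauss) = 0"
proof -
  have "(\<integral>x. x \<partial>std_gauss) = (\<integral>x. std_normal_density x * x^(2*0+1) \<partial>lborel)"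
    unfolding std_gauss_def by (subst integral_density) (auto simp: normal_density_nonneg)
  also have "\<dots> = 0" by (rule integral_std_normal_moment_odd)
  finally show ?thesis .
qed

lemma gauss_var: "(\<integral>x. x^2 \<partial>std_gauss) = 1"
proof -
  have "(\<integral>x. x^2 \<partial>std_gauss) = (\<integral>x. std_normal_density x * x^(2*1) \<partial>lborel)"
    unfolding std_gauss_def by (subst integral_density) (auto simp: normal_density_nonneg)
  also have "\<dots> = 1" using integral_std_normal_moment_even[of 1] by simp
  finally show ?thesis .
qed

lemma gauss_integrable_onepow: "integrable std_gauss (\<lambda>x. (1 + \<bar>x\<bar>) ^ k)"
proof -
  have "(\<lambda>x::real. (1 + \<bar>x\<bar>) ^ k) = (\<lambda>x. \<Sum>j\<le>k. of_nat (k choose j) * \<bar>x\<bar> ^ (k - j))"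
    by (auto simp: binomial_ring mult_ac)
  moreover have "integrable std_gauss (\<lambda>x. \<Sum>j\<le>k. of_nat (k choose j) * \<bar>x\<bar> ^ (k - j))"
    by (auto intro!: integrable_sum integrable_mult_right gauss_integrable_abs_pow)
  ultimately show ?thesis by simp
qed

lemma gauss_uminus: "distr std_gauss std_gauss uminus = std_gauss"
proof -
  have m: "uminus \<in> measurable lborel (lborel::real measure)" by simp
  have "distr (density (distr lborel lborel uminus) (\<lambda>x. ennreal (std_normal_density x))) lborel uminus
        = density lborel ((\<lambda>x. ennreal (std_normal_density x)) \<circ> uminus)"
    by (rule distr_density_distr) auto
  moreover have "distr lborel lborel uminus = (lborel::real measure)"
    using lborel_distr_uminus by (metis distr_cong sets_lborel)
  moreover have "(\<lambda>x. ennreal (std_normal_density x)) \<circ> uminus = (\<lambda>x. ennreal (std_normal_density x))"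
    by (auto simp: normal_density_def fun_eq_iff)
  ultimately have "distr std_gauss lborel uminus = std_gauss"
    by (simp add: std_gauss_def)
  then show ?thesis
    by (metis distr_cong sets_gauss sets_lborel)
qed


lemma finite_tuples[simp]: "finite (tuples n p)"
proof -
  have "finite {xs. set xs \<subseteq> {..<n} \<and> length xs = p}"
    by (rule finite_lists_length_eq) simp
  then show ?thesis unfolding tuples_def by (simp add: conj_commute)
qed

interpretation GP: product_sigma_finite "\<lambda>_::nat list. std_gauss"
  unfolding product_sigma_finite_def using prob_space_imp_sigma_finite[OF prob_gauss] by simp

lemma prob_M: "prob_space (gauss_tensor n p)"
  unfolding gauss_tensor_def by (intro prob_space_PiM prob_gauss)

definition DD :: "nat \<Rightarrow> nat \<Rightarrow> nat \<Rightarrow> (nat list \<Rightarrow> real) \<Rightarrow> real" where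
  "DD n p K g = (\<Prod>a\<in>tuples n p. (1 + \<bar>g a\<bar>) ^ K)"

lemma DD_ge1: "1 \<le> DD n p K g"
  unfolding DD_def by (intro prod_ge_1) auto

lemma DD_add: "DD n p (K1 + K2) g = DD n p K1 g * DD n p K2 g"
  unfolding DD_def by (simp add: power_add prod.distrib)

lemma DD_mono: "K1 \<le> K2 \<Longrightarrow> DD n p K1 g \<le> DD n p K2 g"
  unfolding DD_def by (intro prod_mono) (auto intro!: power_increasing)

lemma DD_integrable: "integrable (gauss_tensor n p) (DD n p K)"
  unfolding gauss_tensor_def DD_def
  by (intro GP.product_integrable_prod finite_tuples gauss_integrable_onepow)

lemma coord_le_DD: "a \<in> tuples n p \<Longrightarrow> \<bar>g a\<bar> \<le> DD n p 1 g"
proof -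
  assume a: "a \<in> tuples n p"
  have "DD n p 1 g = (1 + \<bar>g a\<bar>) * (\<Prod>b\<in>tuples n p - {a}. (1 + \<bar>g b\<bar>))"
    unfolding DD_def using a by (simp add: prod.remove)
  moreover have "1 \<le> (\<Prod>b\<in>tuples n p - {a}. (1 + \<bar>g b\<bar>))"
    by (intro prod_ge_1) auto
  ultimately show ?thesis
    by (smt (verit, ccfv_SIG) mult_le_cancel_left1)
qed

definition pb :: "nat \<Rightarrow> nat \<Rightarrow> ((nat list \<Rightarrow> real) \<Rightarrow> real) \<Rightarrow> bool" where
  "pb n p f \<longleftrightarrow> f \<in> borel_measurable (gauss_tensor n p) \<and>
     (\<exists>C K. 0 \<le> C \<and> (\<forall>g\<in>space (gauss_tensor n p). \<bar>f g\<bar> \<le> C * DD n p K g))"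

lemma pb_integrable: "pb n p f \<Longrightarrow> integrable (gauss_tensor n p) f"
proof -
  assume "pb n p f"
  then obtain C K where m: "f \<in> borel_measurable (gauss_tensor n p)" and C: "0 \<le> C"
    and b: "\<forall>g\<in>space (gauss_tensor n p). \<bar>f g\<bar> \<le> C * DD n p K g"
    unfolding pb_def by blast
  have "integrable (gauss_tensor n p) (\<lambda>g. C * DD n p K g)"
    by (intro integrable_mult_right DD_integrable)
  then show ?thesis
  proof (rule Bochner_Integration.integrable_bound)
    show "f \<in> borel_measurable (gauss_tensor n p)" by (rule m)
    show "AE x in gauss_tensor n p. norm (f x) \<le> norm (C * DD n p K x)"
    proof (intro AE_I2)
      fix x assume x: "x \<in> space (gauss_tensor n p)"
      have "\<bar>DD n p K x\<bar> = DD n p K x" using DD_ge1[of n p K x] by simp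
      then show "norm (f x) \<le> norm (C * DD n p K x)"
        using b x C by (simp add: abs_mult)
    qed
  qed
qed

lemma pb_const: "pb n p (\<lambda>g. c)"
  unfolding pb_def
  by (intro conjI exI[of _ "\<bar>c\<bar>"] exI[of _ 0]) (auto simp: DD_def)

lemma meas_coord: "a \<in> tuples n p \<Longrightarrow> (\<lambda>g. g a) \<in> borel_measurable (gauss_tensor n p)"
  unfolding gauss_tensor_def
  using measurable_component_singleton[of a "tuples n p" "\<lambda>_. std_gauss"]
  by (simp cong: measurable_cong_sets)

lemma pb_coord: "a \<in> tuples n p \<Longrightarrow> pb n p (\<lambda>g. g a)"
  unfolding pb_def
  by (intro conjI meas_coord exI[of _ 1] exI[of _ 1]) (auto intro: coord_le_DD[unfolded One_nat_def])

lemma pb_add: "pb n p f \<Longrightarrow> pb n p h \<Longrightarrow> pb n p (\<lambda>g. f g + h g)"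
proof -
  assume "pb n p f" "pb n p h"
  then obtain C1 K1 C2 K2 where m: "f \<in> borel_measurable (gauss_tensor n p)" "h \<in> borel_measurable (gauss_tensor n p)"
    and C: "0 \<le> C1" "0 \<le> C2"
    and b: "\<forall>g\<in>space (gauss_tensor n p). \<bar>f g\<bar> \<le> C1 * DD n p K1 g"
      "\<forall>g\<in>space (gauss_tensor n p). \<bar>h g\<bar> \<le> C2 * DD n p K2 g"
    unfolding pb_def by blast
  show ?thesis unfolding pb_def
  proof (intro conjI exI[of _ "C1 + C2"] exI[of _ "K1 + K2"] ballI)
    show "(\<lambda>g. f g + h g) \<in> borel_measurable (gauss_tensor n p)" using m by measurable
    show "0 \<le> C1 + C2" using C by simp
    fix g assume g: "g \<in> space (gauss_tensor n p)"
    have "C1 * DD n p K1 g \<le> C1 * DD n p (K1 + K2) g" "C2 * DD n p K2 g \<le> C2 * DD n p (K1 + K2) g"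
      using C by (auto intro!: mult_left_mono DD_mono)
    moreover have "\<bar>f g\<bar> \<le> C1 * DD n p K1 g" "\<bar>h g\<bar> \<le> C2 * DD n p K2 g" using b g by auto
    ultimately show "\<bar>f g + h g\<bar> \<le> (C1 + C2) * DD n p (K1 + K2) g"
      by (auto simp: algebra_simps)
  qed
qed

lemma pb_mult: "pb n p f \<Longrightarrow> pb n p h \<Longrightarrow> pb n p (\<lambda>g. f g * h g)"
proof -
  assume "pb n p f" "pb n p h"
  then obtain C1 K1 C2 K2 where m: "f \<in> borel_measurable (gauss_tensor n p)" "h \<in> borel_measurable (gauss_tensor n p)"
    and C: "0 \<le> C1" "0 \<le> C2"
    and b: "\<forall>g\<in>space (gauss_tensor n p). \<bar>f g\<bar> \<le> C1 * DD n p K1 g"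
      "\<forall>g\<in>space (gauss_tensor n p). \<bar>h g\<bar> \<le> C2 * DD n p K2 g"
    unfolding pb_def by blast
  show ?thesis unfolding pb_def
  proof (intro conjI exI[of _ "C1 * C2"] exI[of _ "K1 + K2"] ballI)
    show "(\<lambda>g. f g * h g) \<in> borel_measurable (gauss_tensor n p)" using m by measurable
    show "0 \<le> C1 * C2" using C by simp
    fix g assume g: "g \<in> space (gauss_tensor n p)"
    have "\<bar>f g * h g\<bar> = \<bar>f g\<bar> * \<bar>h g\<bar>" by (simp add: abs_mult)
    also have "\<dots> \<le> (C1 * DD n p K1 g) * (C2 * DD n p K2 g)"
      using b g by (intro mult_mono) auto
    also have "\<dots> = (C1 * C2) * DD n p (K1 + K2) g" by (simp add: DD_add)
    finally show "\<bar>f g * h g\<bar> \<le> (C1 * C2) * DD n p (K1 + K2) g" .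
  qed
qed

lemma pb_diff: "pb n p f \<Longrightarrow> pb n p h \<Longrightarrow> pb n p (\<lambda>g. f g - h g)"
proof -
  assume "pb n p f" "pb n p h"
  then have "pb n p (\<lambda>g. f g + (-1) * h g)" by (intro pb_add pb_mult pb_const)
  then show ?thesis by simp
qed

lemma pb_sum: "finite A \<Longrightarrow> (\<And>x. x \<in> A \<Longrightarrow> pb n p (f x)) \<Longrightarrow> pb n p (\<lambda>g. \<Sum>x\<in>A. f x g)"
  by (induction A rule: finite_induct) (auto intro: pb_const pb_add)

lemma pb_prod: "finite A \<Longrightarrow> (\<And>x. x \<in> A \<Longrightarrow> pb n p (f x)) \<Longrightarrow> pb n p (\<lambda>g. \<Prod>x\<in>A. f x g)"
  by (induction A rule: finite_induct) (auto intro: pb_const pb_mult)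


lemma flip_zero:
  assumes B: "B \<subseteq> tuples n p" and pbf: "pb n p f"
    and flip: "\<And>h. h \<in> space (gauss_tensor n p) \<Longrightarrow> f (\<lambda>l. if l \<in> B then - h l else h l) = - f h"
  shows "integral\<^sup>L (gauss_tensor n p) f = 0"
proof -
  define J where "J = tuples n p - B"
  have tu: "tuples n p = J \<union> B" and JB: "J \<inter> B = {}" using B by (auto simp: J_def)
  have finJ: "finite J" "finite B" using B by (auto simp: J_def intro: finite_subset)
  have M: "gauss_tensor n p = PiM (J \<union> B) (\<lambda>_. std_gauss)"
    unfolding gauss_tensor_def tu ..
  have intf: "integrable (PiM (J \<union> B) (\<lambda>_. std_gauss)) f"
    using pb_integrable[OF pbf] M by simp
  have fm: "f \<in> borel_measurable (PiM (J \<union> B) (\<lambda>_. std_gauss))"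
    using pbf M unfolding pb_def by simp
  have flip': "\<And>h. h \<in> space (PiM (J \<union> B) (\<lambda>_. std_gauss)) \<Longrightarrow> f (\<lambda>l. if l \<in> B then - h l else h l) = - f h"
    using flip M by simp
  have dis: "distr (PiM B (\<lambda>_. std_gauss)) (PiM B (\<lambda>_. std_gauss)) (compose B uminus) = PiM B (\<lambda>_. std_gauss)"
    using distr_PiM_finite_prob_space'[of B "\<lambda>_. std_gauss" "\<lambda>_. std_gauss" uminus] finJ
    by (simp add: prob_gauss gauss_uminus measurable_cong_sets[OF sets_gauss sets_gauss])
  have cm: "compose B uminus \<in> measurable (PiM B (\<lambda>_. std_gauss)) (PiM B (\<lambda>_. std_gauss))"
  proof -
    have "(\<lambda>y. \<lambda>i\<in>B. - y i) \<in> measurable (PiM B (\<lambda>_. std_gauss)) (PiM B (\<lambda>_. std_gauss))"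
    proof (rule measurable_restrict)
      fix i assume i: "i \<in> B"
      have "(\<lambda>y. y i) \<in> borel_measurable (PiM B (\<lambda>_. std_gauss))"
        using measurable_component_singleton[OF i, of "\<lambda>_. std_gauss"]
        by (simp add: measurable_cong_sets[OF refl sets_gauss])
      then have "(\<lambda>y. - y i) \<in> borel_measurable (PiM B (\<lambda>_. std_gauss))"
        by (rule borel_measurable_uminus)
      then show "(\<lambda>y. - y i) \<in> measurable (PiM B (\<lambda>_. std_gauss)) std_gauss"
        by (simp add: measurable_cong_sets[OF refl sets_gauss])
    qed
    moreover have "compose B (uminus::real\<Rightarrow>real) = (\<lambda>y. \<lambda>i\<in>B. - y i)" by (rule ext) (simp add: compose_def)
    ultimately show ?thesis by simp
  qed
  have inner: "(\<integral>y. f (merge J B (x, y)) \<partial>PiM B (\<lambda>_. std_gauss)) = 0"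
    if x: "x \<in> space (PiM J (\<lambda>_. std_gauss))" for x
  proof -
    let ?F = "\<lambda>y. f (merge J B (x, y))"
    have pm: "(\<lambda>y. (x, y)) \<in> measurable (PiM B (\<lambda>_. std_gauss)) (PiM J (\<lambda>_. std_gauss) \<Otimes>\<^sub>M PiM B (\<lambda>_. std_gauss))"
      using x by (intro measurable_Pair measurable_const measurable_ident_sets) auto
    have Fm: "?F \<in> borel_measurable (PiM B (\<lambda>_. std_gauss))"
      using measurable_comp[OF measurable_comp[OF pm measurable_merge] fm] by (simp add: comp_def)
    have "(\<integral>y. ?F y \<partial>PiM B (\<lambda>_. std_gauss)) =
        (\<integral>y. ?F y \<partial>distr (PiM B (\<lambda>_. std_gauss)) (PiM B (\<lambda>_. std_gauss)) (compose B uminus))"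
      by (simp add: dis)
    also have "\<dots> = (\<integral>y. ?F (compose B uminus y) \<partial>PiM B (\<lambda>_. std_gauss))"
      by (rule integral_distr[OF cm Fm])
    also have "\<dots> = (\<integral>y. - ?F y \<partial>PiM B (\<lambda>_. std_gauss))"
    proof (rule Bochner_Integration.integral_cong[OF refl])
      fix y assume y: "y \<in> space (PiM B (\<lambda>_. std_gauss))"
      have sp: "merge J B (x, y) \<in> space (PiM (J \<union> B) (\<lambda>_. std_gauss))"
        using measurable_space[OF measurable_merge, of "(x,y)" J "\<lambda>_. std_gauss" B] x y
        by (simp add: space_pair_measure)
      have "merge J B (x, compose B uminus y) = (\<lambda>l. if l \<in> B then - merge J B (x, y) l else merge J B (x, y) l)"
        using JB by (auto simp: merge_def compose_def fun_eq_iff)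
      then show "?F (compose B uminus y) = - ?F y"
        using flip'[OF sp] by simp
    qed
    also have "\<dots> = - (\<integral>y. ?F y \<partial>PiM B (\<lambda>_. std_gauss))"
      by (rule Bochner_Integration.integral_minus)
    finally show ?thesis by simp
  qed
  have "integral\<^sup>L (gauss_tensor n p) f = (\<integral>x. (\<integral>y. f (merge J B (x, y)) \<partial>PiM B (\<lambda>_. std_gauss)) \<partial>PiM J (\<lambda>_. std_gauss))"
    unfolding M by (rule GP.product_integral_fold[OF JB finJ intf])
  also have "\<dots> = (\<integral>x. 0 \<partial>PiM J (\<lambda>_. std_gauss))"
    by (rule Bochner_Integration.integral_cong[OF refl]) (rule inner)
  finally show ?thesis by simp
qed

lemma coord_factor:
  assumes a: "a \<in> tuples n p" and R: "pb n p R"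
    and inv: "\<And>h y. h \<in> space (gauss_tensor n p) \<Longrightarrow> R (h(a:=y)) = R h"
    and pbf: "pb n p (\<lambda>g. \<phi> (g a) * R g)"
  shows "(\<integral>g. \<phi> (g a) * R g \<partial>gauss_tensor n p) = (\<integral>y. \<phi> y \<partial>std_gauss) * (\<integral>g. R g \<partial>gauss_tensor n p)"
proof -
  define J where "J = tuples n p - {a}"
  have tu: "tuples n p = insert a J" and aJ: "a \<notin> J" "finite J" using a by (auto simp: J_def)
  have M: "gauss_tensor n p = PiM (insert a J) (\<lambda>_. std_gauss)"
    unfolding gauss_tensor_def tu ..
  define R0 where "R0 x = R (x(a:=0))" for x
  have upd: "R (x(a := y)) = R0 x" if x: "x \<in> space (PiM J (\<lambda>_. std_gauss))" for x y
  proof -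
    have "x(a:=0) \<in> space (gauss_tensor n p)"
      using x unfolding M space_PiM by (intro PiE_fun_upd) auto
    from inv[OF this, of y] show ?thesis by (simp only: fun_upd_upd R0_def)
  qed
  have "(\<integral>g. \<phi> (g a) * R g \<partial>gauss_tensor n p) =
      (\<integral>x. (\<integral>y. \<phi> ((x(a:=y)) a) * R (x(a:=y)) \<partial>std_gauss) \<partial>PiM J (\<lambda>_. std_gauss))"
    unfolding M using pb_integrable[OF pbf] M by (intro GP.product_integral_insert aJ) simp_all
  also have "\<dots> = (\<integral>x. (\<integral>y. \<phi> y \<partial>std_gauss) * R0 x \<partial>PiM J (\<lambda>_. std_gauss))"
  proof (intro Bochner_Integration.integral_cong refl)
    fix x assume x: "x \<in> space (PiM J (\<lambda>_. std_gauss))"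
    have "(\<integral>y. \<phi> ((x(a:=y)) a) * R (x(a:=y)) \<partial>std_gauss) = (\<integral>y. \<phi> y * R0 x \<partial>std_gauss)"
      by (intro Bochner_Integration.integral_cong refl) (simp only: upd[OF x] fun_upd_same)
    also have "\<dots> = (\<integral>y. \<phi> y \<partial>std_gauss) * R0 x"
      by (rule integral_mult_left_zero)
    finally show "(\<integral>y. \<phi> ((x(a:=y)) a) * R (x(a:=y)) \<partial>std_gauss) = (\<integral>y. \<phi> y \<partial>std_gauss) * R0 x" .
  qed
  also have "\<dots> = (\<integral>y. \<phi> y \<partial>std_gauss) * (\<integral>x. R0 x \<partial>PiM J (\<lambda>_. std_gauss))"
    by (rule integral_mult_right_zero)
  also have "(\<integral>x. R0 x \<partial>PiM J (\<lambda>_. std_gauss)) =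
      (\<integral>x. (\<integral>y. R (x(a:=y)) \<partial>std_gauss) \<partial>PiM J (\<lambda>_. std_gauss))"
  proof (intro Bochner_Integration.integral_cong refl)
    fix x assume x: "x \<in> space (PiM J (\<lambda>_. std_gauss))"
    have "(\<integral>y. R (x(a:=y)) \<partial>std_gauss) = (\<integral>y. R0 x \<partial>std_gauss)"
      by (intro Bochner_Integration.integral_cong refl) (simp only: upd[OF x])
    also have "\<dots> = R0 x"
      using prob_space.prob_space[OF prob_gauss] by simp
    finally show "R0 x = (\<integral>y. R (x(a:=y)) \<partial>std_gauss)" by simp
  qed
  also have "\<dots> = (\<integral>g. R g \<partial>gauss_tensor n p)"
    unfolding M using pb_integrable[OF R] M by (intro GP.product_integral_insert[symmetric] aJ) simp_all
  finally show ?thesis .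
qed


definition lst :: "nat \<Rightarrow> nat multiset \<Rightarrow> (nat \<Rightarrow> nat) \<Rightarrow> nat list" where
  "lst p S \<pi> = map (\<lambda>k. sorted_list_of_multiset S ! \<pi> k) [0..<p]"

lemma wig_alt: "wig_tensor p g S = (1 / sqrt (fact p)) * (\<Sum>\<pi>\<in>{\<pi>. \<pi> permutes {..<p}}. g (lst p S \<pi>))"
  unfolding wig_tensor_def lst_def Let_def ..

lemma len_sorted: "length (sorted_list_of_multiset S) = size S"
  by (metis mset_sorted_list_of_multiset size_mset)

lemma mset_lst: "\<pi> permutes {..<p} \<Longrightarrow> size S = p \<Longrightarrow> mset (lst p S \<pi>) = S"
proof -
  assume pi: "\<pi> permutes {..<p}" and s: "size S = p"
  have "lst p S \<pi> = permute_list \<pi> (sorted_list_of_multiset S)"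
    unfolding lst_def permute_list_def len_sorted s ..
  moreover have "mset (permute_list \<pi> (sorted_list_of_multiset S)) = S"
    using pi s by (subst mset_permute_list) (simp_all add: len_sorted)
  ultimately show ?thesis by simp
qed

lemma lst_tuples: "\<pi> permutes {..<p} \<Longrightarrow> size S = p \<Longrightarrow> set_mset S \<subseteq> {..<n} \<Longrightarrow> lst p S \<pi> \<in> tuples n p"
proof -
  assume pi: "\<pi> permutes {..<p}" and s: "size S = p" and sub: "set_mset S \<subseteq> {..<n}"
  have "set (lst p S \<pi>) = set_mset S" using mset_lst[OF pi s] by (metis set_mset_mset)
  moreover have "length (lst p S \<pi>) = p" by (simp add: lst_def)
  ultimately show ?thesis using sub by (simp add: tuples_def)
qed

lemma pb_wig: "size S = p \<Longrightarrow> set_mset S \<subseteq> {..<n} \<Longrightarrow> pb n p (\<lambda>g. wig_tensor p g S)"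
  unfolding wig_alt
  by (intro pb_mult pb_const pb_sum pb_coord lst_tuples finite_permutations) auto

lemma wig_local: "size S = p \<Longrightarrow> (\<And>l. mset l = S \<Longrightarrow> g l = g' l) \<Longrightarrow> wig_tensor p g S = wig_tensor p g' S"
  unfolding wig_alt by (intro arg_cong[where f="\<lambda>x. _ * x"] sum.cong refl) (simp add: mset_lst)

lemma wig_flip:
  assumes "size S' = p" "set_mset S' \<subseteq> {..<n}"
  shows "wig_tensor p (\<lambda>l. if l \<in> {l\<in>tuples n p. mset l = S} then - g l else g l) S' =
     (if S' = S then - wig_tensor p g S' else wig_tensor p g S')"
proof -
  have "wig_tensor p (\<lambda>l. if l \<in> {l\<in>tuples n p. mset l = S} then - g l else g l) S' =
      (1 / sqrt (fact p)) * (\<Sum>\<pi>\<in>{\<pi>. \<pi> permutes {..<p}}. (if S' = S then - g (lst p S' \<pi>) else g (lst p S' \<pi>)))"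
    unfolding wig_alt using assms
    by (intro arg_cong[where f="\<lambda>x. _ * x"] sum.cong refl) (auto simp: mset_lst lst_tuples)
  then show ?thesis unfolding wig_alt by (simp add: sum_negf)
qed

lemma lst_inj:
  assumes "\<forall>x. count S x \<le> 1" "size S = p" "\<pi> permutes {..<p}" "\<pi>' permutes {..<p}"
    "lst p S \<pi> = lst p S \<pi>'"
  shows "\<pi> = \<pi>'"
proof
  fix k
  let ?xs = "sorted_list_of_multiset S"
  have d: "distinct ?xs"
    unfolding distinct_count_atmost_1
  proof
    fix a
    have c: "count (mset ?xs) a = count S a" by simp
    show "count (mset ?xs) a = (if a \<in> set ?xs then 1 else 0)"
    proof (cases "a \<in> set ?xs")
      case True
      then have "count (mset ?xs) a > 0" by simp
      then have "count S a > 0" using c by simp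
      moreover have "count S a \<le> 1" using assms(1) by blast
      ultimately have "count S a = 1" by linarith
      then show ?thesis using True c by presburger
    next
      case False then show ?thesis by (simp add: not_in_iff)
    qed
  qed
  show "\<pi> k = \<pi>' k"
  proof (cases "k < p")
    case True
    have "lst p S \<pi> ! k = ?xs ! \<pi> k" "lst p S \<pi>' ! k = ?xs ! \<pi>' k"
      using True by (simp_all add: lst_def)
    then have "?xs ! \<pi> k = ?xs ! \<pi>' k" using assms(5) by simp
    moreover have "\<pi> k < p" "\<pi>' k < p" using assms(3,4) True permutes_in_image by fastforce+
    ultimately show ?thesis using d assms(2) by (simp add: nth_eq_iff_index_eq len_sorted)
  next
    case False
    then show ?thesis using assms(3,4) by (simp add: permutes_not_in)
  qed
qed


lemma frob_factor_zero:
  assumes s: "size S = p" and sub: "set_mset S \<subseteq> {..<n}" and d: "\<forall>x. count S x \<le> 1"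
    and R: "pb n p R"
    and inv: "\<And>h a y. h \<in> space (gauss_tensor n p) \<Longrightarrow> mset a = S \<Longrightarrow> R (h(a:=y)) = R h"
  shows "(\<integral>g. ((wig_tensor p g S)\<^sup>2 - 1) * R g \<partial>gauss_tensor n p) = 0"
proof -
  define P where "P = {\<pi>. \<pi> permutes {..<p}}"
  define L where "L = lst p S"
  have finP: "finite P" unfolding P_def by (simp add: finite_permutations)
  have cardP: "card P = fact p" unfolding P_def by (rule card_permutations) auto
  have Lt: "\<pi> \<in> P \<Longrightarrow> L \<pi> \<in> tuples n p" for \<pi>
    unfolding P_def L_def using s sub by (auto intro: lst_tuples)
  have Lm: "\<pi> \<in> P \<Longrightarrow> mset (L \<pi>) = S" for \<pi>
    unfolding P_def L_def using s by (auto intro: mset_lst)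
  have Li: "\<pi> \<in> P \<Longrightarrow> \<pi>' \<in> P \<Longrightarrow> L \<pi> = L \<pi>' \<Longrightarrow> \<pi> = \<pi>'" for \<pi> \<pi>'
    unfolding P_def L_def using lst_inj[OF d s] by blast
  have fp: "(0::real) < fact p" by simp
  have W2: "(wig_tensor p g S)\<^sup>2 = (1 / fact p) * (\<Sum>\<pi>\<in>P. \<Sum>\<pi>'\<in>P. g (L \<pi>) * g (L \<pi>'))" for g
  proof -
    have "(wig_tensor p g S)\<^sup>2 = (1 / sqrt (fact p))\<^sup>2 * ((\<Sum>\<pi>\<in>P. g (L \<pi>)) * (\<Sum>\<pi>\<in>P. g (L \<pi>)))"
      unfolding wig_alt P_def L_def by (simp add: power2_eq_square power_mult_distrib)
    also have "(1 / sqrt (fact p))\<^sup>2 = (1 / fact p :: real)"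
      using fp by (simp add: power_divide)
    finally show ?thesis by (simp add: sum_product)
  qed
  have pbR: "pb n p (\<lambda>g. g a * g b * R g)" if "a \<in> tuples n p" "b \<in> tuples n p" for a b
    using that R by (intro pb_mult pb_coord)
  have each: "(\<integral>g. g (L \<pi>) * g (L \<pi>') * R g \<partial>gauss_tensor n p) =
      (if \<pi> = \<pi>' then (\<integral>g. R g \<partial>gauss_tensor n p) else 0)" if pi: "\<pi> \<in> P" "\<pi>' \<in> P" for \<pi> \<pi>'
  proof (cases "\<pi> = \<pi>'")
    case True
    have "(\<integral>g. g (L \<pi>) * g (L \<pi>') * R g \<partial>gauss_tensor n p) =
        (\<integral>g. (\<lambda>y. y\<^sup>2) (g (L \<pi>)) * R g \<partial>gauss_tensor n p)"
      using True by (simp add: power2_eq_square)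
    also have "\<dots> = (\<integral>y. y\<^sup>2 \<partial>std_gauss) * (\<integral>g. R g \<partial>gauss_tensor n p)"
    proof (rule coord_factor[OF Lt[OF pi(1)] R])
      show "R (h(L \<pi> := y)) = R h" if "h \<in> space (gauss_tensor n p)" for h y
        using inv[OF that Lm[OF pi(1)]] .
      show "pb n p (\<lambda>g. (g (L \<pi>))\<^sup>2 * R g)"
        using pbR[OF Lt[OF pi(1)] Lt[OF pi(1)]] by (simp add: power2_eq_square)
    qed
    finally show ?thesis using True by (simp add: gauss_var)
  next
    case False
    then have ne: "L \<pi> \<noteq> L \<pi>'" using Li pi by blast
    have "(\<integral>g. g (L \<pi>) * g (L \<pi>') * R g \<partial>gauss_tensor n p) =
        (\<integral>g. (\<lambda>y. y) (g (L \<pi>)) * (g (L \<pi>') * R g) \<partial>gauss_tensor n p)"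
      by (simp add: mult.assoc)
    also have "\<dots> = (\<integral>y. y \<partial>std_gauss) * (\<integral>g. g (L \<pi>') * R g \<partial>gauss_tensor n p)"
    proof (rule coord_factor[OF Lt[OF pi(1)]])
      show "pb n p (\<lambda>g. g (L \<pi>') * R g)" using R Lt[OF pi(2)] by (intro pb_mult pb_coord)
      show "(h(L \<pi> := y)) (L \<pi>') * R (h(L \<pi> := y)) = h (L \<pi>') * R h"
        if "h \<in> space (gauss_tensor n p)" for h y
        using inv[OF that Lm[OF pi(1)]] ne by simp
      show "pb n p (\<lambda>g. g (L \<pi>) * (g (L \<pi>') * R g))"
        using pbR[OF Lt[OF pi(1)] Lt[OF pi(2)]] by (simp add: mult.assoc)
    qed
    finally show ?thesis using False by (simp add: gauss_mean)
  qed
  have "(\<integral>g. (wig_tensor p g S)\<^sup>2 * R g \<partial>gauss_tensor n p) =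
      (\<integral>g. (1 / fact p) * (\<Sum>\<pi>\<in>P. \<Sum>\<pi>'\<in>P. g (L \<pi>) * g (L \<pi>') * R g) \<partial>gauss_tensor n p)"
    by (simp add: W2 sum_distrib_right mult.assoc)
  also have "\<dots> = (1 / fact p) * (\<integral>g. (\<Sum>\<pi>\<in>P. \<Sum>\<pi>'\<in>P. g (L \<pi>) * g (L \<pi>') * R g) \<partial>gauss_tensor n p)"
    by (rule integral_mult_right_zero)
  also have "(\<integral>g. (\<Sum>\<pi>\<in>P. \<Sum>\<pi>'\<in>P. g (L \<pi>) * g (L \<pi>') * R g) \<partial>gauss_tensor n p) =
      (\<Sum>\<pi>\<in>P. \<Sum>\<pi>'\<in>P. (\<integral>g. g (L \<pi>) * g (L \<pi>') * R g \<partial>gauss_tensor n p))"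
  proof -
    have "(\<integral>g. (\<Sum>\<pi>\<in>P. \<Sum>\<pi>'\<in>P. g (L \<pi>) * g (L \<pi>') * R g) \<partial>gauss_tensor n p) =
      (\<Sum>\<pi>\<in>P. (\<integral>g. (\<Sum>\<pi>'\<in>P. g (L \<pi>) * g (L \<pi>') * R g) \<partial>gauss_tensor n p))"
      by (rule Bochner_Integration.integral_sum) (intro pb_integrable pb_sum pbR Lt finP; assumption)
    also have "\<dots> = (\<Sum>\<pi>\<in>P. \<Sum>\<pi>'\<in>P. (\<integral>g. g (L \<pi>) * g (L \<pi>') * R g \<partial>gauss_tensor n p))"
      by (intro sum.cong refl Bochner_Integration.integral_sum pb_integrable pbR Lt)
    finally show ?thesis .
  qed
  also have "\<dots> = (\<Sum>\<pi>\<in>P. \<Sum>\<pi>'\<in>P. (if \<pi> = \<pi>' then (\<integral>g. R g \<partial>gauss_tensor n p) else 0))"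
    by (intro sum.cong refl each)
  also have "\<dots> = fact p * (\<integral>g. R g \<partial>gauss_tensor n p)"
    using finP cardP by simp
  finally have "(\<integral>g. (wig_tensor p g S)\<^sup>2 * R g \<partial>gauss_tensor n p) = (\<integral>g. R g \<partial>gauss_tensor n p)"
    using fp by simp
  moreover have "(\<integral>g. ((wig_tensor p g S)\<^sup>2 - 1) * R g \<partial>gauss_tensor n p) =
      (\<integral>g. (wig_tensor p g S)\<^sup>2 * R g \<partial>gauss_tensor n p) - (\<integral>g. R g \<partial>gauss_tensor n p)"
  proof -
    have "(\<integral>g. ((wig_tensor p g S)\<^sup>2 - 1) * R g \<partial>gauss_tensor n p) =
        (\<integral>g. (wig_tensor p g S)\<^sup>2 * R g - R g \<partial>gauss_tensor n p)"
      by (simp add: algebra_simps)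
    also have "\<dots> = (\<integral>g. (wig_tensor p g S)\<^sup>2 * R g \<partial>gauss_tensor n p) - (\<integral>g. R g \<partial>gauss_tensor n p)"
      using R s sub unfolding power2_eq_square
      by (intro Bochner_Integration.integral_diff pb_integrable pb_mult pb_wig) auto
    finally show ?thesis .
  qed
  ultimately show ?thesis by simp
qed


lemma mset2_eq:
  assumes "size M = 2" "v \<in># M" "w \<in># M" "v \<noteq> w"
  shows "M = {#v, w#}"
proof -
  have M: "M = add_mset v (M - {#v#})" using assms(2) by (simp add: insert_DiffM)
  have w: "w \<in># M - {#v#}" using assms(3,4) by (simp add: in_diff_count)
  have "size (M - {#v#}) = 1" using assms(1,2) by (simp add: size_Diff_singleton)
  then have "\<exists>a. M - {#v#} = {#a#}" by (rule size_1_singleton_mset)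
  then obtain a where "M - {#v#} = {#a#}" by blast
  with w have "M - {#v#} = {#w#}" by simp
  with M show ?thesis by simp
qed

locale labg =
  fixes p n :: nat and G :: "('v,'e) mgraph" and i :: "'e \<Rightarrow> nat"
  assumes reg: "regular p G" and p1: "p \<ge> 1"
    and imap: "i \<in> edges G \<rightarrow>\<^sub>E {..<n}" and inj: "inj_on i (edges G)"
begin

abbreviation L where "L \<equiv> lab_at G i"

lemma wf: "wf_mgraph G" using reg by (simp add: regular_def)
lemma finE: "finite (edges G)" using wf by (simp add: wf_mgraph_def)
lemma finV: "finite (verts G)" using wf by (simp add: wf_mgraph_def)
lemma size_ends: "e \<in> edges G \<Longrightarrow> size (ends G e) = 2" using wf by (simp add: wf_mgraph_def)
lemma ends_verts: "e \<in> edges G \<Longrightarrow> set_mset (ends G e) \<subseteq> verts G" using wf by (simp add: wf_mgraph_def)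
lemma deg: "v \<in> verts G \<Longrightarrow> mdeg G v = p" using reg by (simp add: regular_def)

lemma count_lab: "e \<in> edges G \<Longrightarrow> count (L v) (i e) = count (ends G e) v"
proof -
  assume e: "e \<in> edges G"
  have "count (L v) (i e) = (\<Sum>e'\<in>edges G. if i e = i e' then count (ends G e') v else 0)"
    unfolding lab_at_def count_sum count_replicate_mset ..
  also have "\<dots> = (\<Sum>e'\<in>edges G. if e' = e then count (ends G e') v else 0)"
    using e inj by (intro sum.cong refl) (auto dest: inj_onD)
  also have "\<dots> = count (ends G e) v" using e finE by simp
  finally show ?thesis .
qed

lemma count_lab0: "x \<notin> i ` edges G \<Longrightarrow> count (L v) x = 0"
  unfolding lab_at_def count_sum count_replicate_mset by (auto intro!: sum.neutral)

lemma size_lab: "v \<in> verts G \<Longrightarrow> size (L v) = p"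
  unfolding lab_at_def size_multiset_sum using deg by (simp add: mdeg_def)

lemma set_lab: "set_mset (L v) \<subseteq> {..<n}"
proof
  fix x assume "x \<in># L v"
  then have "count (L v) x \<noteq> 0" by simp
  then show "x \<in> {..<n}" using count_lab0[of x v] imap by (metis PiE_mem image_iff)
qed

lemma same_lab:
  assumes v: "v \<in> verts G" and w: "w \<in> verts G" and vw: "v \<noteq> w" and eq: "L v = L w"
  shows "frob_pair p G v w"
proof -
  have cnt: "count (ends G e) v = count (ends G e) w" if "e \<in> edges G" for e
    using count_lab[OF that, of v] count_lab[OF that, of w] eq by simp
  have en: "ends G e = {#v, w#}" if e: "e \<in> edges G" and "v \<in># ends G e \<or> w \<in># ends G e" for e
  proof -
    have "v \<in># ends G e" "w \<in># ends G e" using that cnt[OF e] by (metis count_greater_zero_iff)+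
    then show ?thesis using size_ends[OF e] vw by (intro mset2_eq)
  qed
  have c: "count (ends G e) v = (if ends G e = {#v, w#} then 1 else 0)" if e: "e \<in> edges G" for e
  proof (cases "v \<in># ends G e")
    case True then show ?thesis using en[OF e] vw by auto
  next
    case False then show ?thesis using vw by (auto simp: not_in_iff)
  qed
  have "p = mdeg G v" using deg[OF v] by simp
  also have "\<dots> = (\<Sum>e\<in>edges G. if ends G e = {#v, w#} then 1 else 0)"
    unfolding mdeg_def by (intro sum.cong refl c)
  also have "\<dots> = card {e\<in>edges G. ends G e = {#v, w#}}"
    using finE by (simp add: sum.inter_filter[symmetric])
  finally show ?thesis unfolding frob_pair_def using v w vw en by auto
qed

lemma frob_sym: "frob_pair p G u w \<Longrightarrow> frob_pair p G w u"
  unfolding frob_pair_def by (auto simp: add_mset_commute)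

lemma frob_uniq: "frob_pair p G u w \<Longrightarrow> frob_pair p G u w' \<Longrightarrow> w = w'"
proof -
  assume a: "frob_pair p G u w" "frob_pair p G u w'"
  have "card {e\<in>edges G. ends G e = {#u, w#}} \<noteq> 0" using a(1) p1 by (simp add: frob_pair_def)
  then have "{e\<in>edges G. ends G e = {#u, w#}} \<noteq> {}" by (metis card.empty)
  then obtain e where e: "e \<in> edges G" "ends G e = {#u, w#}" by blast
  then have "ends G e = {#u, w'#}" using a(2) by (simp add: frob_pair_def)
  with e show ?thesis by simp
qed

lemma frob_verts_in: "frob_pair p G u w \<Longrightarrow> u \<in> verts G \<and> w \<in> verts G \<and> u \<noteq> w"
  by (simp add: frob_pair_def)

lemma lab_pair_frob:
  assumes f: "frob_pair p G u w"
  shows "lab_pair G i {u, w} = L u"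
proof (rule multiset_eqI)
  fix x
  define E' where "E' = {e\<in>edges G. set_mset (ends G e) = {u, w}}"
  have finE': "finite E'" unfolding E'_def using finE by simp
  have uw: "u \<noteq> w" using f by (simp add: frob_pair_def)
  have en: "e \<in> edges G \<Longrightarrow> u \<in># ends G e \<Longrightarrow> ends G e = {#u, w#}" for e
    using f by (simp add: frob_pair_def)
  have cl: "count (lab_pair G i {u, w}) x = card {e\<in>E'. i e = x}"
    unfolding lab_pair_def E'_def[symmetric] using finE' by (rule count_image_mset_eq_card_vimage)
  show "count (lab_pair G i {u, w}) x = count (L u) x"
  proof (cases "x \<in> i ` edges G")
    case True
    then obtain e where e: "e \<in> edges G" "x = i e" by blast
    have s: "{e'\<in>E'. i e' = x} = (if e \<in> E' then {e} else {})"
      using e inj unfolding E'_def by (auto dest: inj_onD)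
    show ?thesis
    proof (cases "e \<in> E'")
      case True
      then have "u \<in># ends G e" unfolding E'_def by auto
      then have "ends G e = {#u, w#}" using en e by simp
      then show ?thesis using cl s True count_lab[OF e(1), of u] e uw by simp
    next
      case False
      have "\<not> u \<in># ends G e"
      proof
        assume "u \<in># ends G e"
        then have "ends G e = {#u, w#}" using en e by simp
        then have "e \<in> E'" using e unfolding E'_def by simp
        with False show False by simp
      qed
      moreover have "{e'\<in>E'. i e' = x} = {}" using s False by simp
      then have "card {e'\<in>E'. i e' = x} = 0" by (metis card.empty)
      ultimately show ?thesis using cl count_lab[OF e(1), of u] e by (simp add: not_in_iff)
    qed
  next
    case False
    have "{e'\<in>E'. i e' = x} = {}" using False unfolding E'_def by auto
    then have "card {e'\<in>E'. i e' = x} = 0" by (metis card.empty)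
    then show ?thesis using cl count_lab0[OF False] by simp
  qed
qed

lemma lab_frob_eq: "frob_pair p G u w \<Longrightarrow> L u = L w"
proof -
  assume f: "frob_pair p G u w"
  have a: "lab_pair G i {u, w} = L u" by (rule lab_pair_frob[OF f])
  have b: "lab_pair G i {w, u} = L w" by (rule lab_pair_frob[OF frob_sym[OF f]])
  have c: "{w, u} = {u, w}" by blast
  from a b c show ?thesis by metis
qed

lemma lab_frob_distinct:
  assumes f: "frob_pair p G u w"
  shows "count (L u) x \<le> 1"
proof (cases "x \<in> i ` edges G")
  case True
  then obtain e where e: "e \<in> edges G" "x = i e" by blast
  have uw: "u \<noteq> w" using f by (simp add: frob_pair_def)
  show ?thesis
  proof (cases "u \<in># ends G e")
    case True
    then have "ends G e = {#u, w#}" using f e by (simp add: frob_pair_def)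
    then show ?thesis using count_lab[OF e(1), of u] e uw by simp
  next
    case False then show ?thesis using count_lab[OF e(1), of u] e by (simp add: not_in_iff)
  qed
next
  case False then show ?thesis using count_lab0 by simp
qed

end


definition partf :: "nat \<Rightarrow> ('v,'e) mgraph \<Rightarrow> ('e \<Rightarrow> nat) \<Rightarrow> (nat list \<Rightarrow> real) \<Rightarrow> real" where
  "partf p G i g = (\<Prod>v\<in>verts G - frob_verts p G. wig_tensor p g (lab_at G i v)) *
      (\<Prod>P\<in>frob_pairs p G. (wig_tensor p g (lab_pair G i P))\<^sup>2 - 1)"

context labg
begin

abbreviation "VG \<equiv> verts G - frob_verts p G"
abbreviation "FG \<equiv> frob_verts p G"
abbreviation "PG \<equiv> frob_pairs p G"
definition "cG S = card {v\<in>VG. L v = S}"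
definition "qG S \<longleftrightarrow> S \<in> L ` FG"

lemma FG_iff: "u \<in> FG \<longleftrightarrow> (\<exists>w. frob_pair p G u w)"
  unfolding frob_verts_def by (auto simp: frob_pair_def)

lemma FG_sub: "FG \<subseteq> verts G"
  unfolding frob_verts_def by auto

lemma V_lab_ne: "v \<in> VG \<Longrightarrow> v' \<in> verts G \<Longrightarrow> v' \<noteq> v \<Longrightarrow> L v' \<noteq> L v"
proof
  assume v: "v \<in> VG" and v': "v' \<in> verts G" "v' \<noteq> v" and eq: "L v' = L v"
  have "frob_pair p G v v'" using v v' eq by (intro same_lab) auto
  then have "v \<in> FG" using FG_iff by blast
  with v show False by simp
qed

lemma cG_le1: "cG S \<le> 1"
proof -
  have fin: "finite {v\<in>VG. L v = S}" using finV by simp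
  have "\<forall>a\<in>{v\<in>VG. L v = S}. \<forall>b\<in>{v\<in>VG. L v = S}. a = b"
    using V_lab_ne by fastforce
  then show ?thesis unfolding cG_def using card_le_Suc0_iff_eq[OF fin] by simp
qed

lemma q_empty: "qG S \<Longrightarrow> {v\<in>VG. L v = S} = {}"
proof -
  assume "qG S"
  then obtain u where u: "u \<in> FG" "S = L u" unfolding qG_def by blast
  show ?thesis
  proof (rule ccontr)
    assume "{v\<in>VG. L v = S} \<noteq> {}"
    then obtain v where v: "v \<in> VG" "L v = S" by blast
    have "u \<noteq> v" using u v by auto
    then show False using V_lab_ne[OF v(1), of u] u v FG_sub by auto
  qed
qed

lemma q_c0: "qG S \<Longrightarrow> cG S = 0"
proof -
  assume q: "qG S"
  show ?thesis unfolding cG_def q_empty[OF q] by simp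
qed

lemma fiber: "card {v\<in>verts G. L v = S} = cG S + (if qG S then 2 else 0)"
proof -
  have un: "{v\<in>verts G. L v = S} = {v\<in>VG. L v = S} \<union> {u\<in>FG. L u = S}"
    using FG_sub by auto
  have fin1: "finite {v\<in>VG. L v = S}" "finite {u\<in>FG. L u = S}"
    using finV FG_sub by (auto intro: finite_subset)
  have c2: "card {u\<in>FG. L u = S} = (if qG S then 2 else 0)"
  proof (cases "qG S")
    case True
    then obtain u0 where u0: "u0 \<in> FG" "S = L u0" unfolding qG_def by blast
    then obtain w0 where f: "frob_pair p G u0 w0" using FG_iff by blast
    have "{u\<in>FG. L u = S} = {u0, w0}"
    proof
      show "{u0, w0} \<subseteq> {u\<in>FG. L u = S}"
        using u0 f lab_frob_eq[OF f] FG_iff frob_sym[OF f] by auto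
      show "{u\<in>FG. L u = S} \<subseteq> {u0, w0}"
      proof
        fix u assume u: "u \<in> {u\<in>FG. L u = S}"
        show "u \<in> {u0, w0}"
        proof (cases "u = u0")
          case False
          have "frob_pair p G u0 u"
            using u u0 False FG_sub by (intro same_lab) auto
          then show ?thesis using frob_uniq[OF f] by auto
        qed simp
      qed
    qed
    moreover have "u0 \<noteq> w0" using f by (simp add: frob_pair_def)
    ultimately show ?thesis using True by simp
  next
    case False
    then have "{u\<in>FG. L u = S} = {}" unfolding qG_def by auto
    then have "card {u\<in>FG. L u = S} = 0" by (metis card.empty)
    then show ?thesis using False by simp
  qed
  show ?thesis unfolding un cG_def
    by (subst card_Un_disjoint) (use fin1 c2 in auto)
qed

lemma PG_iff: "P \<in> PG \<longleftrightarrow> (\<exists>u w. P = {u, w} \<and> frob_pair p G u w)"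
  unfolding frob_pairs_def by auto

lemma finPG: "finite PG"
proof -
  have "PG \<subseteq> Pow (verts G)"
  proof
    fix P assume "P \<in> PG"
    then obtain u w where "P = {u, w}" "frob_pair p G u w" using PG_iff by blast
    then show "P \<in> Pow (verts G)" using frob_verts_in by auto
  qed
  then show ?thesis using finV by (meson finite_Pow_iff finite_subset)
qed

lemma PG_lab: "P \<in> PG \<Longrightarrow> \<exists>u. frob_pair p G u (SOME w. frob_pair p G u w) \<and> u \<in> FG \<and> u \<in> verts G \<and> lab_pair G i P = L u"
proof -
  assume "P \<in> PG"
  then obtain u w where P: "P = {u, w}" "frob_pair p G u w" using PG_iff by blast
  then have "frob_pair p G u (SOME w. frob_pair p G u w)" by (metis someI)
  then show ?thesis using P lab_pair_frob[OF P(2)] FG_iff frob_verts_in[OF P(2)] by blast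
qed

lemma PG_lab': "P \<in> PG \<Longrightarrow> \<exists>u. u \<in> FG \<and> u \<in> verts G \<and> lab_pair G i P = L u"
  using PG_lab by blast

lemma PG_uniq:
  assumes P: "P \<in> PG" and P': "P' \<in> PG" and eq: "lab_pair G i P = lab_pair G i P'"
  shows "P = P'"
proof -
  obtain u w where Pu: "P = {u, w}" "frob_pair p G u w" using P PG_iff by blast
  obtain u' w' where Pu': "P' = {u', w'}" "frob_pair p G u' w'" using P' PG_iff by blast
  have "L u = L u'" using eq lab_pair_frob[OF Pu(2)] lab_pair_frob[OF Pu'(2)] Pu Pu' by simp
  show ?thesis
  proof (cases "u = u'")
    case True
    then have "w = w'" using frob_uniq Pu Pu' by blast
    then show ?thesis using True Pu Pu' by simp
  next
    case False
    have f: "frob_pair p G u u'"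
      using \<open>L u = L u'\<close> False frob_verts_in[OF Pu(2)] frob_verts_in[OF Pu'(2)] by (intro same_lab) auto
    have "u' = w" using frob_uniq[OF Pu(2) f] by simp
    moreover have "w' = u" using frob_uniq[OF Pu'(2) frob_sym[OF f]] by simp
    ultimately show ?thesis using Pu Pu' by auto
  qed
qed

lemma q_P0: "qG S \<Longrightarrow> \<exists>P0\<in>PG. lab_pair G i P0 = S"
proof -
  assume "qG S"
  then obtain u where u: "u \<in> FG" "S = L u" unfolding qG_def by blast
  then obtain w where f: "frob_pair p G u w" using FG_iff by blast
  then have "{u, w} \<in> PG" using PG_iff by blast
  then show ?thesis using lab_pair_frob[OF f] u by auto
qed

lemma msets_ok:
  shows "v \<in> verts G \<Longrightarrow> size (L v) = p \<and> set_mset (L v) \<subseteq> {..<n}"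
    and "P \<in> PG \<Longrightarrow> size (lab_pair G i P) = p \<and> set_mset (lab_pair G i P) \<subseteq> {..<n}"
  using size_lab set_lab PG_lab' by (metis)+

lemma pb_part: "pb n p (partf p G i)"
proof -
  have "pb n p (\<lambda>g. (\<Prod>v\<in>VG. wig_tensor p g (L v)) *
      (\<Prod>P\<in>PG. wig_tensor p g (lab_pair G i P) * wig_tensor p g (lab_pair G i P) - 1))"
    using msets_ok finV finPG
    by (intro pb_mult pb_prod pb_diff pb_wig pb_const) auto
  then show ?thesis unfolding partf_def power2_eq_square by (simp add: fun_eq_iff)
qed

lemma flip_part:
  "partf p G i (\<lambda>l. if l \<in> {l\<in>tuples n p. mset l = S} then - g l else g l) = (-1) ^ cG S * partf p G i g"
proof -
  let ?f = "\<lambda>l. if l \<in> {l\<in>tuples n p. mset l = S} then - g l else g l"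
  have A: "(\<Prod>v\<in>VG. wig_tensor p ?f (L v)) = (\<Prod>v\<in>VG. (if L v = S then -1 else 1) * wig_tensor p g (L v))"
  proof (intro prod.cong refl)
    fix v assume "v \<in> VG"
    then have "size (L v) = p" "set_mset (L v) \<subseteq> {..<n}" using msets_ok(1) by auto
    from wig_flip[OF this, of S g] show "wig_tensor p ?f (L v) = (if L v = S then -1 else 1) * wig_tensor p g (L v)"
      by simp
  qed
  have B: "(\<Prod>v\<in>VG. (if L v = S then -1 else 1::real)) = (-1) ^ cG S"
  proof -
    have "(\<Prod>v\<in>VG. (if L v = S then -1 else 1::real)) = (\<Prod>v\<in>{v\<in>VG. L v = S}. -1)"
      using finV by (simp add: prod.If_cases Int_def conj_commute)
    then show ?thesis unfolding cG_def by simp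
  qed
  have C: "(\<Prod>P\<in>PG. (wig_tensor p ?f (lab_pair G i P))\<^sup>2 - 1) = (\<Prod>P\<in>PG. (wig_tensor p g (lab_pair G i P))\<^sup>2 - 1)"
  proof (intro prod.cong refl)
    fix P assume "P \<in> PG"
    then have "size (lab_pair G i P) = p" "set_mset (lab_pair G i P) \<subseteq> {..<n}" using msets_ok(2) by auto
    from wig_flip[OF this, of S g] show "(wig_tensor p ?f (lab_pair G i P))\<^sup>2 - 1 = (wig_tensor p g (lab_pair G i P))\<^sup>2 - 1"
      by simp
  qed
  show ?thesis unfolding partf_def A C prod.distrib B by simp
qed

lemma free_part:
  assumes "\<forall>v\<in>VG. L v \<noteq> S" "\<forall>P\<in>PG. lab_pair G i P \<noteq> S" "mset a = S"
  shows "partf p G i (h(a:=y)) = partf p G i h"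
proof -
  have w: "wig_tensor p (h(a:=y)) S' = wig_tensor p h S'" if "S' \<noteq> S" "size S' = p" for S'
    using that assms(3) by (intro wig_local) auto
  have A: "(\<Prod>v\<in>VG. wig_tensor p (h(a:=y)) (L v)) = (\<Prod>v\<in>VG. wig_tensor p h (L v))"
  proof (intro prod.cong refl w)
    fix v assume "v \<in> VG" then show "L v \<noteq> S" "size (L v) = p" using assms(1) msets_ok(1) by auto
  qed
  have B: "(\<Prod>P\<in>PG. (wig_tensor p (h(a:=y)) (lab_pair G i P))\<^sup>2 - 1) = (\<Prod>P\<in>PG. (wig_tensor p h (lab_pair G i P))\<^sup>2 - 1)"
  proof (intro prod.cong refl)
    fix P assume "P \<in> PG"
    then have "lab_pair G i P \<noteq> S" "size (lab_pair G i P) = p" using assms(2) msets_ok(2) by auto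
    then show "(wig_tensor p (h(a:=y)) (lab_pair G i P))\<^sup>2 - 1 = (wig_tensor p h (lab_pair G i P))\<^sup>2 - 1"
      using w by simp
  qed
  show ?thesis unfolding partf_def A B ..
qed

lemma split_part:
  assumes q: "qG S"
  shows "\<exists>R. (\<forall>g. partf p G i g = ((wig_tensor p g S)\<^sup>2 - 1) * R g) \<and> pb n p R \<and>
     (\<forall>h a y. mset a = S \<longrightarrow> R (h(a:=y)) = R h)"
proof -
  obtain P0 where P0: "P0 \<in> PG" "lab_pair G i P0 = S" using q_P0[OF q] by blast
  define R where "R g = (\<Prod>v\<in>VG. wig_tensor p g (L v)) *
      (\<Prod>P\<in>PG - {P0}. (wig_tensor p g (lab_pair G i P))\<^sup>2 - 1)" for g
  have eq: "partf p G i g = ((wig_tensor p g S)\<^sup>2 - 1) * R g" for g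
    unfolding partf_def R_def using P0 finPG by (simp add: prod.remove mult_ac)
  have pbR: "pb n p R"
  proof -
    have "pb n p (\<lambda>g. (\<Prod>v\<in>VG. wig_tensor p g (L v)) *
        (\<Prod>P\<in>PG - {P0}. wig_tensor p g (lab_pair G i P) * wig_tensor p g (lab_pair G i P) - 1))"
      using msets_ok finV finPG
      by (intro pb_mult pb_prod pb_diff pb_wig pb_const) auto
    then show ?thesis unfolding R_def power2_eq_square by (simp add: fun_eq_iff)
  qed
  have ne1: "\<forall>v\<in>VG. L v \<noteq> S" using q_empty[OF q] by auto
  have ne2: "\<forall>P\<in>PG - {P0}. lab_pair G i P \<noteq> S" using PG_uniq P0 by auto
  have fr: "R (h(a:=y)) = R h" if "mset a = S" for h a y
  proof -
    have w: "wig_tensor p (h(a:=y)) S' = wig_tensor p h S'" if "S' \<noteq> S" "size S' = p" for S'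
      using that \<open>mset a = S\<close> by (intro wig_local) auto
    have A: "(\<Prod>v\<in>VG. wig_tensor p (h(a:=y)) (L v)) = (\<Prod>v\<in>VG. wig_tensor p h (L v))"
    proof (intro prod.cong refl w)
      fix v assume "v \<in> VG" then show "L v \<noteq> S" "size (L v) = p" using ne1 msets_ok(1) by auto
    qed
    have B: "(\<Prod>P\<in>PG - {P0}. (wig_tensor p (h(a:=y)) (lab_pair G i P))\<^sup>2 - 1) = (\<Prod>P\<in>PG - {P0}. (wig_tensor p h (lab_pair G i P))\<^sup>2 - 1)"
    proof (intro prod.cong refl)
      fix P assume "P \<in> PG - {P0}"
      then have "lab_pair G i P \<noteq> S" "size (lab_pair G i P) = p" using ne2 msets_ok(2) by auto
      then show "(wig_tensor p (h(a:=y)) (lab_pair G i P))\<^sup>2 - 1 = (wig_tensor p h (lab_pair G i P))\<^sup>2 - 1"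
        using w by simp
    qed
    show ?thesis unfolding R_def A B ..
  qed
  show ?thesis using eq pbR fr by blast
qed

end


lemma fiber_bij:
  assumes A: "finite A" and B: "finite B" and c: "\<And>m. card {a\<in>A. f a = m} = card {b\<in>B. g b = m}"
  shows "\<exists>\<phi>. bij_betw \<phi> A B \<and> (\<forall>a\<in>A. g (\<phi> a) = f a)"
proof -
  have "\<forall>m. \<exists>\<psi>. bij_betw \<psi> {a\<in>A. f a = m} {b\<in>B. g b = m}"
  proof
    fix m
    show "\<exists>\<psi>. bij_betw \<psi> {a\<in>A. f a = m} {b\<in>B. g b = m}"
      using A B c[of m] by (intro finite_same_card_bij) auto
  qed
  then obtain \<Psi> where \<Psi>: "\<And>m. bij_betw (\<Psi> m) {a\<in>A. f a = m} {b\<in>B. g b = m}" by metis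
  define \<phi> where "\<phi> a = \<Psi> (f a) a" for a
  have inB: "a \<in> A \<Longrightarrow> \<phi> a \<in> {b\<in>B. g b = f a}" for a
    unfolding \<phi>_def using bij_betw_apply[OF \<Psi>[of "f a"], of a] by simp
  have "inj_on \<phi> A"
  proof
    fix a a' assume a: "a \<in> A" "a' \<in> A" "\<phi> a = \<phi> a'"
    then have fa: "f a = f a'" using inB[of a] inB[of a'] by auto
    have "\<Psi> (f a) a = \<Psi> (f a) a'" using a(3) fa unfolding \<phi>_def by simp
    then show "a = a'" using bij_betw_imp_inj_on[OF \<Psi>[of "f a"]] a fa
      by (auto dest: inj_onD)
  qed
  moreover have "\<phi> ` A = B"
  proof
    show "\<phi> ` A \<subseteq> B" using inB by auto
    show "B \<subseteq> \<phi> ` A"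
    proof
      fix b assume b: "b \<in> B"
      then have "b \<in> \<Psi> (g b) ` {a\<in>A. f a = g b}"
        using bij_betw_imp_surj_on[OF \<Psi>[of "g b"]] by auto
      then obtain a where a: "a \<in> A" "f a = g b" "b = \<Psi> (g b) a" by auto
      then have "\<phi> a = b" unfolding \<phi>_def by simp
      then show "b \<in> \<phi> ` A" using a(1) by (metis imageI)
    qed
  qed
  ultimately show ?thesis using inB unfolding bij_betw_def by auto
qed

lemma count_image_inj:
  "inj_on \<phi> V \<Longrightarrow> set_mset M \<subseteq> V \<Longrightarrow> v \<in> V \<Longrightarrow> count (image_mset \<phi> M) (\<phi> v) = count M v"
proof (induction M)
  case empty then show ?case by simp
next
  case (add x M)
  then have "\<phi> v = \<phi> x \<longleftrightarrow> v = x" by (auto dest: inj_onD)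
  with add show ?case by auto
qed

context labg begin

lemma lab_set: "i ` edges G = (\<Union>v\<in>verts G. set_mset (L v))"
proof
  show "i ` edges G \<subseteq> (\<Union>v\<in>verts G. set_mset (L v))"
  proof
    fix x assume "x \<in> i ` edges G"
    then obtain e where e: "e \<in> edges G" "x = i e" by blast
    have "ends G e \<noteq> {#}" using size_ends[OF e(1)] by auto
    then obtain v where v: "v \<in># ends G e" by blast
    then have "v \<in> verts G" using ends_verts[OF e(1)] by auto
    moreover have "count (L v) (i e) > 0" using count_lab[OF e(1), of v] v by simp
    ultimately show "x \<in> (\<Union>v\<in>verts G. set_mset (L v))" using e by auto
  qed
  show "(\<Union>v\<in>verts G. set_mset (L v)) \<subseteq> i ` edges G"
  proof
    fix x assume "x \<in> (\<Union>v\<in>verts G. set_mset (L v))"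
    then obtain v where "x \<in># L v" by blast
    then have "count (L v) x \<noteq> 0" by simp
    then show "x \<in> i ` edges G" using count_lab0[of x v] by metis
  qed
qed

end

lemma iso_from_labels:
  assumes lG: "labg p n G i" and lH: "labg p n H j"
    and fib: "\<And>S. card {v\<in>verts G. lab_at G i v = S} = card {w\<in>verts H. lab_at H j w = S}"
  shows "mgraph_iso G H"
proof -
  interpret g: labg p n G i by fact
  interpret h: labg p n H j by fact
  obtain \<phi> where bij: "bij_betw \<phi> (verts G) (verts H)" and lab: "\<forall>v\<in>verts G. lab_at H j (\<phi> v) = lab_at G i v"
    using fiber_bij[OF g.finV h.finV fib] by blast
  have injphi: "inj_on \<phi> (verts G)" and imphi: "\<phi> ` verts G = verts H"
    using bij by (auto simp: bij_betw_def)
  have labs: "i ` edges G = j ` edges H"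
  proof -
    have "i ` edges G = (\<Union>v\<in>verts G. set_mset (lab_at H j (\<phi> v)))"
      unfolding g.lab_set using lab by auto
    also have "\<dots> = (\<Union>w\<in>verts H. set_mset (lab_at H j w))"
      unfolding imphi[symmetric] by simp
    finally show ?thesis unfolding h.lab_set .
  qed
  define hh where "hh e = the_inv_into (edges H) j (i e)" for e
  have bh: "bij_betw hh (edges G) (edges H)"
  proof -
    have "bij_betw i (edges G) (i ` edges G)" using g.inj by (rule inj_on_imp_bij_betw)
    moreover have "bij_betw (the_inv_into (edges H) j) (j ` edges H) (edges H)"
      using h.inj by (rule bij_betw_the_inv_into[OF inj_on_imp_bij_betw])
    ultimately have "bij_betw (the_inv_into (edges H) j \<circ> i) (edges G) (edges H)"
      using labs by (metis bij_betw_trans)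
    then show ?thesis unfolding hh_def comp_def .
  qed
  have jh: "e \<in> edges G \<Longrightarrow> j (hh e) = i e" for e
    unfolding hh_def using labs h.inj by (intro f_the_inv_into_f) auto
  have hE: "e \<in> edges G \<Longrightarrow> hh e \<in> edges H" for e by (rule bij_betw_apply[OF bh])
  have ends: "ends H (hh e) = image_mset \<phi> (ends G e)" if e: "e \<in> edges G" for e
  proof (rule multiset_eqI)
    fix w
    show "count (ends H (hh e)) w = count (image_mset \<phi> (ends G e)) w"
    proof (cases "w \<in> verts H")
      case True
      then obtain v where v: "v \<in> verts G" "w = \<phi> v" using imphi by auto
      have "count (ends H (hh e)) w = count (lab_at H j (\<phi> v)) (j (hh e))"
        using h.count_lab[OF hE[OF e], of w] v by simp
      also have "\<dots> = count (lab_at G i v) (i e)" using lab v jh[OF e] by simp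
      also have "\<dots> = count (ends G e) v" by (rule g.count_lab[OF e])
      also have "\<dots> = count (image_mset \<phi> (ends G e)) w"
        using count_image_inj[OF injphi g.ends_verts[OF e] v(1)] v by simp
      finally show ?thesis .
    next
      case False
      have "w \<notin># ends H (hh e)" using h.ends_verts[OF hE[OF e]] False by auto
      moreover have "w \<notin># image_mset \<phi> (ends G e)" using g.ends_verts[OF e] imphi False by auto
      ultimately show ?thesis by (metis not_in_iff)
    qed
  qed
  show ?thesis unfolding mgraph_iso_def using bij bh ends by blast
qed


lemma case_b:
  assumes lG: "labg p n G i" and lH: "labg p n H j"
    and q: "labg.qG p G i S" and nq: "\<not> labg.qG p H j S" and c: "labg.cG p H j S = 0"
  shows "(\<integral>g. partf p G i g * partf p H j g \<partial>gauss_tensor n p) = 0"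
proof -
  interpret g: labg p n G i by fact
  interpret h: labg p n H j by fact
  obtain R where R: "\<forall>g. partf p G i g = ((wig_tensor p g S)\<^sup>2 - 1) * R g" "pb n p R"
      "\<forall>h a y. mset a = S \<longrightarrow> R (h(a:=y)) = R h"
    using g.split_part[OF q] by blast
  obtain u where u: "u \<in> frob_verts p G" "S = lab_at G i u" using q g.qG_def by auto
  obtain w where f: "frob_pair p G u w" using g.FG_iff u by blast
  have sS: "size S = p" "set_mset S \<subseteq> {..<n}" using g.msets_ok(1) u g.FG_sub by auto
  have dS: "\<forall>x. count S x \<le> 1" using g.lab_frob_distinct[OF f] u by simp
  have fin: "finite {v\<in>verts H - frob_verts p H. lab_at H j v = S}" using h.finV by simp
  have "{v\<in>verts H - frob_verts p H. lab_at H j v = S} = {}"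
    using c fin unfolding h.cG_def by (simp only: card_0_eq)
  then have hf1: "\<forall>v\<in>verts H - frob_verts p H. lab_at H j v \<noteq> S" by blast
  have hf2: "\<forall>P\<in>frob_pairs p H. lab_pair H j P \<noteq> S"
  proof
    fix P assume "P \<in> frob_pairs p H"
    then obtain u' where "u' \<in> frob_verts p H" "lab_pair H j P = lab_at H j u'" using h.PG_lab' by blast
    then show "lab_pair H j P \<noteq> S" using nq unfolding h.qG_def by auto
  qed
  have "(\<integral>g. partf p G i g * partf p H j g \<partial>gauss_tensor n p) =
      (\<integral>g. ((wig_tensor p g S)\<^sup>2 - 1) * (R g * partf p H j g) \<partial>gauss_tensor n p)"
    using R(1) by (simp add: mult.assoc)
  also have "\<dots> = 0"
  proof (rule frob_factor_zero[OF sS dS])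
    show "pb n p (\<lambda>g. R g * partf p H j g)" using R(2) h.pb_part by (rule pb_mult)
    show "R (h(a:=y)) * partf p H j (h(a:=y)) = R h * partf p H j h"
      if "mset a = S" for h a y
      using R(3) h.free_part[OF hf1 hf2 that] that by simp
  qed
  finally show ?thesis .
qed

lemma term_zero:
  assumes lG: "labg p n G i" and lH: "labg p n H j" and niso: "\<not> mgraph_iso G H"
  shows "(\<integral>g. partf p G i g * partf p H j g \<partial>gauss_tensor n p) = 0"
proof -
  interpret g: labg p n G i by fact
  interpret h: labg p n H j by fact
  consider (a) "\<exists>S. g.cG S \<noteq> h.cG S"
    | (b) "\<forall>S. g.cG S = h.cG S" "\<exists>S. g.qG S \<noteq> h.qG S"
    | (c) "\<forall>S. g.cG S = h.cG S" "\<forall>S. g.qG S = h.qG S" by blast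
  then show ?thesis
  proof cases
    case a
    then obtain S where S: "g.cG S \<noteq> h.cG S" by blast
    have odd: "g.cG S + h.cG S = 1" using S g.cG_le1[of S] h.cG_le1[of S] by linarith
    show ?thesis
    proof (rule flip_zero[of "{l\<in>tuples n p. mset l = S}"])
      show "{l\<in>tuples n p. mset l = S} \<subseteq> tuples n p" by auto
      show "pb n p (\<lambda>g. partf p G i g * partf p H j g)" using g.pb_part h.pb_part by (rule pb_mult)
      fix hh
      show "partf p G i (\<lambda>l. if l \<in> {l\<in>tuples n p. mset l = S} then - hh l else hh l) *
          partf p H j (\<lambda>l. if l \<in> {l\<in>tuples n p. mset l = S} then - hh l else hh l) =
          - (partf p G i hh * partf p H j hh)"
      proof -
        have "(-1::real) ^ g.cG S * (-1) ^ h.cG S = -1"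
          unfolding power_add[symmetric] odd by simp
        then show ?thesis unfolding g.flip_part h.flip_part
          by (metis (no_types, lifting) mult.assoc mult.left_commute mult_minus1)
      qed
    qed
  next
    case b
    then obtain S where S: "g.qG S \<noteq> h.qG S" by blast
    show ?thesis
    proof (cases "g.qG S")
      case True
      then have "h.cG S = 0" using g.q_c0 b(1) by metis
      then show ?thesis using case_b[OF lG lH True] S True by simp
    next
      case False
      then have hq: "h.qG S" using S by simp
      then have "g.cG S = 0" using h.q_c0 b(1) by metis
      then have "(\<integral>g. partf p H j g * partf p G i g \<partial>gauss_tensor n p) = 0"
        using case_b[OF lH lG hq] False by simp
      then show ?thesis by (simp add: mult.commute)
    qed
  next
    case c
    have "mgraph_iso G H"
    proof (rule iso_from_labels[OF lG lH])
      fix S show "card {v\<in>verts G. lab_at G i v = S} = card {w\<in>verts H. lab_at H j w = S}"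
        unfolding g.fiber h.fiber using c by simp
    qed
    with niso show ?thesis by simp
  qed
qed

lemma mc_partf: "mc n p G (wig_tensor p g) = (\<Sum>i\<in>{i\<in>edges G \<rightarrow>\<^sub>E {..<n}. inj_on i (edges G)}. partf p G i g)"
  unfolding mc_def partf_def ..

theorem proposition4p7:
  fixes n p :: nat
    and G :: "('v,'e) mgraph" and H :: "('w,'f) mgraph"
  assumes "p \<ge> 1"
    and "regular p G" and "regular p H"
    and "\<not> mgraph_iso G H"
  shows "integrable (gauss_tensor n p)
           (\<lambda>g. mc n p G (wig_tensor p g) * mc n p H (wig_tensor p g))
         \<and> (\<integral>g. mc n p G (wig_tensor p g) * mc n p H (wig_tensor p g) \<partial>gauss_tensor n p) = 0"
proof -
  define LG where "LG = {i\<in>edges G \<rightarrow>\<^sub>E {..<n}. inj_on i (edges G)}"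
  define LH where "LH = {j\<in>edges H \<rightarrow>\<^sub>E {..<n}. inj_on j (edges H)}"
  have lG: "labg p n G i" if "i \<in> LG" for i
    using that assms unfolding LG_def by unfold_locales auto
  have lH: "labg p n H j" if "j \<in> LH" for j
    using that assms unfolding LH_def by unfold_locales auto
  have finG: "finite (edges G)" and finH: "finite (edges H)"
    using assms by (auto simp: regular_def wf_mgraph_def)
  have fLG: "finite LG" unfolding LG_def
    by (rule finite_subset[of _ "edges G \<rightarrow>\<^sub>E {..<n}"]) (auto intro: finite_PiE finG)
  have fLH: "finite LH" unfolding LH_def
    by (rule finite_subset[of _ "edges H \<rightarrow>\<^sub>E {..<n}"]) (auto intro: finite_PiE finH)
  have eq: "mc n p G (wig_tensor p g) * mc n p H (wig_tensor p g) =
      (\<Sum>i\<in>LG. \<Sum>j\<in>LH. partf p G i g * partf p H j g)" for g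
    unfolding mc_partf LG_def LH_def by (rule sum_product)
  have pbt: "pb n p (\<lambda>g. partf p G i g * partf p H j g)" if "i \<in> LG" "j \<in> LH" for i j
    using labg.pb_part[OF lG[OF that(1)]] labg.pb_part[OF lH[OF that(2)]] by (rule pb_mult)
  have "pb n p (\<lambda>g. \<Sum>i\<in>LG. \<Sum>j\<in>LH. partf p G i g * partf p H j g)"
    using fLG fLH pbt by (intro pb_sum) auto
  then have int: "integrable (gauss_tensor n p) (\<lambda>g. mc n p G (wig_tensor p g) * mc n p H (wig_tensor p g))"
    unfolding eq by (rule pb_integrable)
  have "(\<integral>g. mc n p G (wig_tensor p g) * mc n p H (wig_tensor p g) \<partial>gauss_tensor n p) =
      (\<integral>g. (\<Sum>i\<in>LG. \<Sum>j\<in>LH. partf p G i g * partf p H j g) \<partial>gauss_tensor n p)"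
    unfolding eq ..
  also have "\<dots> = (\<Sum>i\<in>LG. (\<integral>g. (\<Sum>j\<in>LH. partf p G i g * partf p H j g) \<partial>gauss_tensor n p))"
    by (rule Bochner_Integration.integral_sum) (use fLH pbt in \<open>auto intro!: pb_integrable pb_sum\<close>)
  also have "\<dots> = (\<Sum>i\<in>LG. \<Sum>j\<in>LH. (\<integral>g. partf p G i g * partf p H j g \<partial>gauss_tensor n p))"
    by (intro sum.cong refl Bochner_Integration.integral_sum pb_integrable pbt)
  also have "\<dots> = 0"
    using term_zero[OF lG lH assms(4)] by simp
  finally show ?thesis using int by simp
qed


end
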